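(* Consider DIVIDING. For all $n\in \mathbb{N}$, $\mathcal{SG}(n)=\Omega_2(n)$.
   Context: DIVIDING is the impartial normal-play game on positive integers (heaps) where a move replaces a heap $n$ by $m\ge 2$ equal heaps $k$ with $km=n$, the resulting heaps being played as a disjunctive sum; a heap of size $1$ is terminal. $\mathcal{SG}$ denotes the Sprague-Grundy value (mex rule; nim-sum for disjunctive sums). $\Omega_2(n)$ is the number of prime factors of $n$ where the odd primes are counted with multiplicity and the prime $2$ is counted without multiplicity (i.e. at most once). *)

theory Defs
  imports "HOL-Computational_Algebra.Primes"
begin

definition mex :: "nat set \<Rightarrow> nat" where
  "mex S = (LEAST x. x \<notin> S)"

definition nim_sum :: "nat list \<Rightarrow> nat" where
  "nim_sum xs = foldr xor xs 0"

text \<open>A move replaces n by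
  m \<ge> 2 equal heaps of size k with k * m = n; equivalently k is a divisor of n
  with k < n and m = n div k.  The resulting position is the disjunctive sum of
  m copies of heap k, whose SG value is the nim-sum of m copies of SG(k).
  Heap 1 (no moves) gets mex {} = 0.  (Heap 0 is not a position; value 0 by convention.)\<close>
function SG :: "nat \<Rightarrow> nat" where
  "SG n = (if n \<le> 1 then 0 else
     mex ((\<lambda>k. nim_sum (replicate (n div k) (SG k))) ` {k. k dvd n \<and> k < n}))"
  by pat_completeness auto
termination
  by (relation "measure id") auto

definition Omega2 :: "nat \<Rightarrow> nat" where
  "Omega2 n = size (filter_mset (\<lambda>p. p \<noteq> 2) (prime_factorization n))
              + (if 2 dvd n then 1 else 0)"

end

theory Submission
  imports Defs
begin

lemma nim_rep: "nim_sum (replicate m v) = (if odd m then v else 0)"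
  by (induction m) (auto simp: nim_sum_def)

lemma sub_size: "s \<le> size (Q::'a multiset) \<Longrightarrow> \<exists>R. R \<subseteq># Q \<and> size R = s"
proof (induction Q arbitrary: s)
  case empty then show ?case by auto
next
  case (add x Q)
  show ?case
  proof (cases "s \<le> size Q")
    case True
    then obtain R where "R \<subseteq># Q" "size R = s" using add by blast
    moreover have "Q \<subseteq># add_mset x Q" by simp
    ultimately show ?thesis using subset_mset.order_trans by blast
  next
    case False
    then show ?thesis using add.prems by (intro exI[of _ "add_mset x Q"]) auto
  qed
qed

lemma filt_id: "(\<forall>x\<in>#M. P x) \<Longrightarrow> filter_mset P M = M"
  by (induction M) auto

lemma Omega2_split:
  assumes "k dvd n" "n > 0" "odd (n div k)"
  shows "Omega2 n = Omega2 k + size (prime_factorization (n div k))"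
proof -
  obtain q where q: "n = k * q" using assms(1) by blast
  have kq: "k > 0" "q > 0" using q assms(2) by auto
  have qd: "q = n div k" using q kq by simp
  have pf: "prime_factorization n = prime_factorization k + prime_factorization q"
    using q kq by (simp add: prime_factorization_mult)
  have oq: "odd q" using assms(3) qd by simp
  have f: "filter_mset (\<lambda>p. p \<noteq> 2) (prime_factorization q) = prime_factorization q"
  proof (rule filt_id, intro ballI)
    fix p assume "p \<in># prime_factorization q"
    then have "p dvd q" by (rule in_prime_factors_imp_dvd)
    then show "p \<noteq> 2" using oq by auto
  qed
  have e: "(2 dvd n) = (2 dvd k)" using q oq by auto
  show ?thesis unfolding Omega2_def pf filter_union_mset size_union f e qd[symmetric] by simp
qed

lemma Omega2_pos: assumes "n > 1" shows "Omega2 n \<ge> 1"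
proof (cases "2 dvd n")
  case True then show ?thesis by (simp add: Omega2_def)
next
  case False
  obtain p where p: "prime p" "p dvd n" using assms prime_factor_nat[of n] by auto
  have "p \<noteq> 2" using p False by auto
  moreover have "p \<in># prime_factorization n" using p assms by (auto simp: in_prime_factors_iff)
  ultimately have "p \<in># filter_mset (\<lambda>p. p \<noteq> 2) (prime_factorization n)" by simp
  then have "size (filter_mset (\<lambda>p. p \<noteq> 2) (prime_factorization n)) \<noteq> 0"
    by auto
  then have "size (filter_mset (\<lambda>p. p \<noteq> 2) (prime_factorization n)) \<ge> 1"
    by linarith
  then show ?thesis by (simp add: Omega2_def)
qed

lemma exist_opt:
  assumes "n > 1" "j < Omega2 n"
  shows "\<exists>k. k dvd n \<and> k < n \<and> (if odd (n div k) then Omega2 k else 0) = j"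
proof (cases "2 dvd n \<and> j = 0")
  case True
  then obtain m where m: "n = 2 * m" by blast
  have m0: "m > 0" using m assms by (cases "m = 0") auto
  have "n div m = 2" using m m0 by simp
  moreover have "m dvd n" "m < n" using m m0 by auto
  ultimately show ?thesis using True by (intro exI[of _ m]) simp
next
  case False
  define Q where "Q = filter_mset (\<lambda>p. p \<noteq> 2) (prime_factorization n)"
  define c where "c = (if 2 dvd n then 1 else 0::nat)"
  have Om: "Omega2 n = size Q + c" unfolding Q_def c_def Omega2_def by simp
  have "size Q + c - j \<le> size Q" using False c_def by auto
  then obtain R where R: "R \<subseteq># Q" "size R = size Q + c - j" using sub_size by blast
  have Rpos: "size R \<ge> 1" using R assms Om by auto
  have Rsub: "R \<subseteq># prime_factorization n" using R(1) Q_def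
    by (metis multiset_filter_subset subset_mset.order_trans)
  have Rpr: "\<And>p. p \<in># R \<Longrightarrow> prime p \<and> p \<noteq> 2"
    using R(1) Q_def by (auto dest!: mset_subset_eqD)
  define d where "d = prod_mset R"
  have dd: "d dvd n" unfolding d_def using Rsub assms
    by (metis prod_mset_subset_imp_dvd prod_mset_prime_factorization_nat not_one_less_zero neq0_conv)
  have pfd: "prime_factorization d = R" unfolding d_def
    using Rpr by (intro prime_factorization_prod_mset_primes) auto
  have od: "odd d" unfolding d_def using Rpr
  proof (induction R)
    case empty then show ?case by simp
  next
    case (add x R)
    have "odd x" using add.prems[of x] by (metis primes_dvd_imp_eq prime_nat_iff two_is_prime_nat dvd_def add_mset_add_single union_single_eq_member)
    then show ?case using add by auto
  qed
  have d1: "d > 1"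
  proof -
    obtain p where "p \<in># R" using Rpos by (metis One_nat_def Suc_le_eq multiset_nonemptyE size_empty less_irrefl)
    then have "prime p" "p dvd d" using Rpr d_def by (auto intro: dvd_prod_mset)
    moreover have "d > 0" using dd assms by (metis dvd_0_left_iff neq0_conv not_one_less_zero)
    ultimately show ?thesis by (metis dvd_imp_le prime_gt_1_nat less_le_trans)
  qed
  define k where "k = n div d"
  have nk: "n = d * k" unfolding k_def using dd by simp
  have kd: "n div k = d" using nk assms by (metis div_mult_self1_is_m mult.commute neq0_conv mult_0_right not_one_less_zero)
  have kdv: "k dvd n" unfolding k_def using dd by (metis dvd_div_mult_self dvd_triv_left)
  have kl: "k < n" unfolding k_def using d1 assms by simp
  have "Omega2 n = Omega2 k + size R" using Omega2_split[OF kdv] assms kd od pfd by simp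
  then have "Omega2 k = j" using R Om assms by simp
  then show ?thesis using kdv kl kd od by (intro exI[of _ k]) auto
qed

theorem mainTheorem9:
  fixes n :: nat
  assumes "n \<ge> 1"
  shows "SG n = Omega2 n"
  using assms
proof (induction n rule: less_induct)
  case (less n)
  show ?case
  proof (cases "n = 1")
    case True
    then show ?thesis by (simp add: Omega2_def)
  next
    case False
    then have n1: "n > 1" using less.prems by simp
    define S where "S = (\<lambda>k. nim_sum (replicate (n div k) (SG k))) ` {k. k dvd n \<and> k < n}"
    have SG_eq: "SG n = mex S" using n1 unfolding S_def by (simp add: SG.simps[of n])
    have opt: "nim_sum (replicate (n div k) (SG k)) = (if odd (n div k) then Omega2 k else 0)"
      if "k dvd n" "k < n" for k
    proof -
      have "k \<ge> 1" using that n1 by (metis dvd_0_left_iff less_one not_le not_one_less_zero)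
      then show ?thesis using less.IH[OF that(2)] by (simp add: nim_rep)
    qed
    have S_eq: "S = (\<lambda>k. if odd (n div k) then Omega2 k else 0) ` {k. k dvd n \<and> k < n}"
      unfolding S_def using opt by (auto intro!: image_cong)
    have notin: "Omega2 n \<notin> S"
    proof
      assume "Omega2 n \<in> S"
      then obtain k where k: "k dvd n" "k < n" "(if odd (n div k) then Omega2 k else 0) = Omega2 n"
        unfolding S_eq by auto
      show False
      proof (cases "odd (n div k)")
        case True
        obtain q where q: "n = k * q" using k(1) by blast
        have k0: "k > 0" using q n1 by (cases "k = 0") auto
        have qd: "n div k = q" using q k0 by simp
        have "q \<noteq> 1" using q k(2) by auto
        moreover have "q \<noteq> 0" using q n1 by (cases "q = 0") auto
        ultimately have "q > 1" by linarith
        then obtain p where p: "prime p" "p dvd q" using prime_factor_nat[of q] by auto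
        then have "p \<in># prime_factorization q" using \<open>q > 1\<close> by (auto simp: in_prime_factors_iff)
        then have "size (prime_factorization q) \<noteq> 0" by auto
        then have "size (prime_factorization (n div k)) \<noteq> 0" using qd by simp
        then have "size (prime_factorization (n div k)) \<ge> 1" by linarith
        then show False using Omega2_split[OF k(1)] True n1 k(3) by simp
      next
        case False
        then show False using k(3) Omega2_pos[OF n1] by simp
      qed
    qed
    have allin: "x \<in> S" if "x < Omega2 n" for x
      using exist_opt[OF n1 that] unfolding S_eq by auto
    have "mex S = Omega2 n" unfolding mex_def
      by (rule Least_equality) (use notin allin not_less in auto)
    then show ?thesis using SG_eq by simp
  qed
qed

end
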